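(* Let $\mathcal{C}$ and $\mathcal{D}$ be categories, let $R$ be a monad on the product category $\mathcal{C}\times\mathcal{D}$ (with unit $\eta$ and Kleisli extension $\mathrm{bind}$), and let $A\in\mathcal{D}$. For $X\in\mathcal{C}$ put $R_{A,1}(X):=\mathrm{pr}_{\mathcal{C}}(R(X,A))$ and $\eta'_X:=\mathrm{pr}_{\mathcal{C}}(\eta_{(X,A)}):X\to R_{A,1}(X)$. For $X,X'\in\mathcal{C}$ and a morphism $f:X\to R_{A,1}(X')$, put $$\mathrm{bind}'(f):=\mathrm{pr}_{\mathcal{C}}\big(\mathrm{bind}(f,\mathrm{pr}_{\mathcal{D}}(\eta_{(X',A)}))\big):R_{A,1}(X)\to R_{A,1}(X'),$$ where $(f,\mathrm{pr}_{\mathcal{D}}(\eta_{(X',A)})):(X,A)\to R(X',A)$ is the morphism of $\mathcal{C}\times\mathcal{D}$ with the indicated components. Then $(R_{A,1},\eta',\mathrm{bind}')$ is a monad on $\mathcal{C}$, i.e. $\mathrm{bind}'(\eta'_X)=\mathrm{id}$, $\mathrm{bind}'(f)\circ\eta'_X=f$, and $\mathrm{bind}'(\mathrm{bind}'(g)\circ f)=\mathrm{bind}'(g)\circ\mathrm{bind}'(f)$ for all $f:X\to R_{A,1}(X')$, $g:X'\to R_{A,1}(X'')$.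
   Context: A monad on a category $\mathcal{E}$ is described in Kleisli form: an object $R(X)$ for each object $X$, morphisms $\eta_X:X\to R(X)$, and for each $f:X\to R(Y)$ a morphism $\mathrm{bind}(f):R(X)\to R(Y)$, such that $\mathrm{bind}(\eta_X)=\mathrm{id}_{R(X)}$, $\mathrm{bind}(f)\circ\eta_X=f$, and $\mathrm{bind}(\mathrm{bind}(g)\circ f)=\mathrm{bind}(g)\circ\mathrm{bind}(f)$ (here $\circ$ is the usual composition, $g\circ f$ meaning first $f$ then $g$). $\mathrm{pr}_{\mathcal{C}},\mathrm{pr}_{\mathcal{D}}$ are the projection functors of $\mathcal{C}\times\mathcal{D}$. *)

theory Defs
  imports Main
begin

text \<open>A category given by its object set, hom-sets, identities and composition
  (Comp g f means first f then g).\<close>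
record ('o, 'm) cat =
  Obj :: "'o set"
  Hom :: "'o \<Rightarrow> 'o \<Rightarrow> 'm set"
  Id :: "'o \<Rightarrow> 'm"
  Comp :: "'m \<Rightarrow> 'm \<Rightarrow> 'm"

definition category :: "('o, 'm) cat \<Rightarrow> bool" where
  "category C \<longleftrightarrow>
     (\<forall>X\<in>Obj C. Id C X \<in> Hom C X X) \<and>
     (\<forall>X\<in>Obj C. \<forall>Y\<in>Obj C. \<forall>Z\<in>Obj C. \<forall>f\<in>Hom C X Y. \<forall>g\<in>Hom C Y Z.
        Comp C g f \<in> Hom C X Z) \<and>
     (\<forall>X\<in>Obj C. \<forall>Y\<in>Obj C. \<forall>f\<in>Hom C X Y.
        Comp C f (Id C X) = f \<and> Comp C (Id C Y) f = f) \<and>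
     (\<forall>W\<in>Obj C. \<forall>X\<in>Obj C. \<forall>Y\<in>Obj C. \<forall>Z\<in>Obj C.
        \<forall>f\<in>Hom C W X. \<forall>g\<in>Hom C X Y. \<forall>h\<in>Hom C Y Z.
        Comp C h (Comp C g f) = Comp C (Comp C h g) f)"

text \<open>Product category; its projection functors are fst and snd on objects and morphisms.\<close>
definition prod_cat :: "('o1, 'm1) cat \<Rightarrow> ('o2, 'm2) cat \<Rightarrow> ('o1 \<times> 'o2, 'm1 \<times> 'm2) cat" where
  "prod_cat C D =
     \<lparr> Obj = Obj C \<times> Obj D,
       Hom = (\<lambda>(X, A) (Y, B). Hom C X Y \<times> Hom D A B),
       Id = (\<lambda>(X, A). (Id C X, Id D A)),
       Comp = (\<lambda>(g1, g2) (f1, f2). (Comp C g1 f1, Comp D g2 f2)) \<rparr>"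

definition kleisli_monad ::
  "('o, 'm) cat \<Rightarrow> ('o \<Rightarrow> 'o) \<Rightarrow> ('o \<Rightarrow> 'm) \<Rightarrow> ('o \<Rightarrow> 'o \<Rightarrow> 'm \<Rightarrow> 'm) \<Rightarrow> bool" where
  "kleisli_monad E R eta bind \<longleftrightarrow>
     (\<forall>X\<in>Obj E. R X \<in> Obj E) \<and>
     (\<forall>X\<in>Obj E. eta X \<in> Hom E X (R X)) \<and>
     (\<forall>X\<in>Obj E. \<forall>Y\<in>Obj E. \<forall>f\<in>Hom E X (R Y). bind X Y f \<in> Hom E (R X) (R Y)) \<and>
     (\<forall>X\<in>Obj E. bind X X (eta X) = Id E (R X)) \<and>
     (\<forall>X\<in>Obj E. \<forall>Y\<in>Obj E. \<forall>f\<in>Hom E X (R Y). Comp E (bind X Y f) (eta X) = f) \<and>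
     (\<forall>X\<in>Obj E. \<forall>Y\<in>Obj E. \<forall>Z\<in>Obj E. \<forall>f\<in>Hom E X (R Y). \<forall>g\<in>Hom E Y (R Z).
        bind X Z (Comp E (bind Y Z g) f) = Comp E (bind Y Z g) (bind X Y f))"

end

theory Submission
  imports Defs
begin

lemma pc_simps:
  "Obj (prod_cat C D) = Obj C \<times> Obj D"
  "Hom (prod_cat C D) P Q = Hom C (fst P) (fst Q) \<times> Hom D (snd P) (snd Q)"
  "Id (prod_cat C D) P = (Id C (fst P), Id D (snd P))"
  "Comp (prod_cat C D) g f = (Comp C (fst g) (fst f), Comp D (snd g) (snd f))"
  by (auto simp: prod_cat_def split: prod.splits)

theorem lemma2p2:
  fixes C :: "('o1, 'm1) cat" and D :: "('o2, 'm2) cat"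
    and R :: "'o1 \<times> 'o2 \<Rightarrow> 'o1 \<times> 'o2"
    and eta :: "'o1 \<times> 'o2 \<Rightarrow> 'm1 \<times> 'm2"
    and bind :: "'o1 \<times> 'o2 \<Rightarrow> 'o1 \<times> 'o2 \<Rightarrow> 'm1 \<times> 'm2 \<Rightarrow> 'm1 \<times> 'm2"
    and A :: 'o2
  assumes "category C" and "category D"
    and "kleisli_monad (prod_cat C D) R eta bind"
    and "A \<in> Obj D"
  shows "kleisli_monad C (\<lambda>X. fst (R (X, A))) (\<lambda>X. fst (eta (X, A)))
           (\<lambda>X X' f. fst (bind (X, A) (X', A) (f, snd (eta (X', A)))))"
proof -
  note M = assms(3)[unfolded kleisli_monad_def pc_simps]
  have RO: "\<And>X. X \<in> Obj C \<Longrightarrow> fst (R (X,A)) \<in> Obj C \<and> snd (R (X,A)) \<in> Obj D"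
    using M assms(4) by (metis SigmaD1 SigmaD2 SigmaI prod.collapse fst_conv snd_conv)
  have EH: "\<And>X. X \<in> Obj C \<Longrightarrow> fst (eta (X,A)) \<in> Hom C X (fst (R (X,A))) \<and> snd (eta (X,A)) \<in> Hom D A (snd (R (X,A)))"
    using M assms(4) by (metis SigmaD1 SigmaD2 SigmaI prod.collapse fst_conv snd_conv)
  have BH: "\<And>X Y f g. X \<in> Obj C \<Longrightarrow> Y \<in> Obj C \<Longrightarrow> f \<in> Hom C X (fst (R (Y,A))) \<Longrightarrow>
      g \<in> Hom D A (snd (R (Y,A))) \<Longrightarrow>
      fst (bind (X,A) (Y,A) (f,g)) \<in> Hom C (fst (R (X,A))) (fst (R (Y,A))) \<and>
      snd (bind (X,A) (Y,A) (f,g)) \<in> Hom D (snd (R (X,A))) (snd (R (Y,A)))"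
  proof -
    fix X Y f g assume a: "X \<in> Obj C" "Y \<in> Obj C" "f \<in> Hom C X (fst (R (Y,A)))" "g \<in> Hom D A (snd (R (Y,A)))"
    have "(X,A) \<in> Obj C \<times> Obj D" "(Y,A) \<in> Obj C \<times> Obj D" using a assms(4) by auto
    moreover have "(f,g) \<in> Hom C (fst (X,A)) (fst (R (Y,A))) \<times> Hom D (snd (X,A)) (snd (R (Y,A)))"
      using a by auto
    ultimately have "bind (X,A) (Y,A) (f,g) \<in> Hom C (fst (X,A)) (fst (R (Y,A))) \<times> Hom D (snd (X,A)) (snd (R (Y,A))) \<longrightarrow> True" by simp
    from M \<open>(X,A) \<in> _\<close> \<open>(Y,A) \<in> _\<close> \<open>(f,g) \<in> _\<close>
    have "bind (X,A) (Y,A) (f,g) \<in> Hom C (fst (R (X,A))) (fst (R (Y,A))) \<times> Hom D (snd (R (X,A))) (snd (R (Y,A)))"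
      by blast
    then show "fst (bind (X,A) (Y,A) (f,g)) \<in> Hom C (fst (R (X,A))) (fst (R (Y,A))) \<and>
      snd (bind (X,A) (Y,A) (f,g)) \<in> Hom D (snd (R (X,A))) (snd (R (Y,A)))"
      by (metis mem_Sigma_iff prod.collapse)
  qed
  have U2: "\<And>X Y f g. X \<in> Obj C \<Longrightarrow> Y \<in> Obj C \<Longrightarrow> f \<in> Hom C X (fst (R (Y,A))) \<Longrightarrow>
      g \<in> Hom D A (snd (R (Y,A))) \<Longrightarrow>
      Comp C (fst (bind (X,A) (Y,A) (f,g))) (fst (eta (X,A))) = f \<and>
      Comp D (snd (bind (X,A) (Y,A) (f,g))) (snd (eta (X,A))) = g"
  proof -
    fix X Y f g assume a: "X \<in> Obj C" "Y \<in> Obj C" "f \<in> Hom C X (fst (R (Y,A)))" "g \<in> Hom D A (snd (R (Y,A)))"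
    have o: "(X,A) \<in> Obj C \<times> Obj D" "(Y,A) \<in> Obj C \<times> Obj D" using a assms(4) by auto
    have h: "(f,g) \<in> Hom C (fst (X,A)) (fst (R (Y,A))) \<times> Hom D (snd (X,A)) (snd (R (Y,A)))"
      using a by auto
    from M o h have "(Comp C (fst (bind (X,A) (Y,A) (f,g))) (fst (eta (X,A))),
        Comp D (snd (bind (X,A) (Y,A) (f,g))) (snd (eta (X,A)))) = (f,g)"
      by blast
    then show "Comp C (fst (bind (X,A) (Y,A) (f,g))) (fst (eta (X,A))) = f \<and>
      Comp D (snd (bind (X,A) (Y,A) (f,g))) (snd (eta (X,A))) = g" by simp
  qed
  have U1: "\<And>X. X \<in> Obj C \<Longrightarrow> fst (bind (X,A) (X,A) (fst (eta (X,A)), snd (eta (X,A)))) = Id C (fst (R (X,A)))"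
  proof -
    fix X assume "X \<in> Obj C"
    then have "(X,A) \<in> Obj C \<times> Obj D" using assms(4) by auto
    with M have "bind (X,A) (X,A) (eta (X,A)) = (Id C (fst (R (X,A))), Id D (snd (R (X,A))))" by blast
    then show "fst (bind (X,A) (X,A) (fst (eta (X,A)), snd (eta (X,A)))) = Id C (fst (R (X,A)))" by simp
  qed
  have AS: "\<And>X Y Z f g. X \<in> Obj C \<Longrightarrow> Y \<in> Obj C \<Longrightarrow> Z \<in> Obj C \<Longrightarrow>
      f \<in> Hom C X (fst (R (Y,A))) \<Longrightarrow> g \<in> Hom C Y (fst (R (Z,A))) \<Longrightarrow>
      fst (bind (X,A) (Z,A) (Comp C (fst (bind (Y,A) (Z,A) (g, snd (eta (Z,A))))) f, snd (eta (Z,A))))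
      = Comp C (fst (bind (Y,A) (Z,A) (g, snd (eta (Z,A))))) (fst (bind (X,A) (Y,A) (f, snd (eta (Y,A)))))"
  proof -
    fix X Y Z f g assume a: "X \<in> Obj C" "Y \<in> Obj C" "Z \<in> Obj C"
      "f \<in> Hom C X (fst (R (Y,A)))" "g \<in> Hom C Y (fst (R (Z,A)))"
    have o: "(X,A) \<in> Obj C \<times> Obj D" "(Y,A) \<in> Obj C \<times> Obj D" "(Z,A) \<in> Obj C \<times> Obj D" using a assms(4) by auto
    have hf: "(f, snd (eta (Y,A))) \<in> Hom C (fst (X,A)) (fst (R (Y,A))) \<times> Hom D (snd (X,A)) (snd (R (Y,A)))"
      using a EH by auto
    have hg: "(g, snd (eta (Z,A))) \<in> Hom C (fst (Y,A)) (fst (R (Z,A))) \<times> Hom D (snd (Y,A)) (snd (R (Z,A)))"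
      using a EH by auto
    from M o hf hg have e: "bind (X,A) (Z,A) (Comp C (fst (bind (Y,A) (Z,A) (g, snd (eta (Z,A))))) f,
        Comp D (snd (bind (Y,A) (Z,A) (g, snd (eta (Z,A))))) (snd (eta (Y,A))))
      = (Comp C (fst (bind (Y,A) (Z,A) (g, snd (eta (Z,A))))) (fst (bind (X,A) (Y,A) (f, snd (eta (Y,A))))),
         Comp D (snd (bind (Y,A) (Z,A) (g, snd (eta (Z,A))))) (snd (bind (X,A) (Y,A) (f, snd (eta (Y,A))))))"
      by (metis fst_conv snd_conv)
    have "Comp D (snd (bind (Y,A) (Z,A) (g, snd (eta (Z,A))))) (snd (eta (Y,A))) = snd (eta (Z,A))"
      using U2[of Y Z g "snd (eta (Z,A))"] a EH by blast
    with e show "fst (bind (X,A) (Z,A) (Comp C (fst (bind (Y,A) (Z,A) (g, snd (eta (Z,A))))) f, snd (eta (Z,A))))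
      = Comp C (fst (bind (Y,A) (Z,A) (g, snd (eta (Z,A))))) (fst (bind (X,A) (Y,A) (f, snd (eta (Y,A)))))"
      by simp
  qed
  show ?thesis unfolding kleisli_monad_def
    apply (intro conjI ballI)
         apply (simp add: RO)
        apply (simp add: EH)
       apply (simp add: BH EH)
      using U1 apply simp
     apply (simp add: U2 EH)
    apply (simp add: AS)
    done
qed

end
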